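(* The family of operators $(T_u)_{u\ge 0}$ defined on $L$ by $(T_uf)(w)=\mathbb{E}\left[f\left(we^{-u}+\sigma(u)Z\right)\right]$, where $\sigma^2(u)=1-e^{-2u}$, is not strongly continuous on $(L,\|\cdot\|_L)$; that is, there exists $f\in L$ such that $\|T_uf-f\|_L$ does not converge to $0$ as $u\searrow 0$.
   Context: $D=D[0,1]$ denotes the space of all càdlàg functions $w:[0,1]\to\mathbb{R}$, and $\|\cdot\|$ denotes the supremum norm on $D$. $L$ is the set of all continuous functions $f:D\to\mathbb{R}$ such that $\sup_{w\in D}\frac{|f(w)|}{1+\|w\|^3}<\infty$, with norm $\|f\|_L=\sup_{w\in D}\frac{|f(w)|}{1+\|w\|^3}$. $Z$ denotes a standard Brownian motion on $[0,1]$, viewed as a random element of $D$. *)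

theory Defs
  imports "HOL-Probability.Probability"
begin

text \<open>Elements of D[0,1] are represented as functions real => real that are
  cadlag on [0,1] and (normalised to be) zero outside [0,1].\<close>

definition cadlag01 :: "(real \<Rightarrow> real) set" where
  "cadlag01 = {w. (\<forall>t. t \<notin> {0..1} \<longrightarrow> w t = 0)
      \<and> (\<forall>t\<in>{0..<1}. (w \<longlongrightarrow> w t) (at_right t))
      \<and> (\<forall>t\<in>{0<..1}. \<exists>l. (w \<longlongrightarrow> l) (at_left t))}"

definition supnorm :: "(real \<Rightarrow> real) \<Rightarrow> real" where
  "supnorm w = (SUP t\<in>{0..1}. \<bar>w t\<bar>)"

definition Lspace :: "((real \<Rightarrow> real) \<Rightarrow> real) set" where
  "Lspace = {f. (\<forall>w\<in>cadlag01. \<forall>e>0. \<exists>d>0. \<forall>v\<in>cadlag01.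
                   supnorm (\<lambda>t. v t - w t) < d \<longrightarrow> \<bar>f v - f w\<bar> < e)
             \<and> (\<exists>C. \<forall>w\<in>cadlag01. \<bar>f w\<bar> \<le> C * (1 + supnorm w ^ 3))}"

text \<open>The L-norm, valued in the extended reals (so it is meaningful even if infinite).\<close>
definition normL :: "((real \<Rightarrow> real) \<Rightarrow> real) \<Rightarrow> ereal" where
  "normL f = (SUP w\<in>cadlag01. ereal (\<bar>f w\<bar> / (1 + supnorm w ^ 3)))"

definition std_BM :: "'a measure \<Rightarrow> (real \<Rightarrow> 'a \<Rightarrow> real) \<Rightarrow> bool" where
  "std_BM M Z \<longleftrightarrow> prob_space M
     \<and> (\<forall>t\<in>{0..1}. Z t \<in> borel_measurable M)
     \<and> (\<forall>\<omega>\<in>space M. Z 0 \<omega> = 0 \<and> continuous_on {0..1} (\<lambda>t. Z t \<omega>))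
     \<and> (\<forall>s t. 0 \<le> s \<and> s < t \<and> t \<le> 1 \<longrightarrow>
          distributed M lborel (\<lambda>\<omega>. Z t \<omega> - Z s \<omega>) (normal_density 0 (sqrt (t - s))))
     \<and> (\<forall>ts. sorted_wrt (<) ts \<and> set ts \<subseteq> {0..1} \<longrightarrow>
          prob_space.indep_vars M (\<lambda>_. borel)
            (\<lambda>i \<omega>. Z (ts ! Suc i) \<omega> - Z (ts ! i) \<omega>) {..<length ts - 1})"

definition BMpath :: "(real \<Rightarrow> 'a \<Rightarrow> real) \<Rightarrow> 'a \<Rightarrow> real \<Rightarrow> real" where
  "BMpath Z \<omega> = (\<lambda>t. if t \<in> {0..1} then Z t \<omega> else 0)"

definition sigmaOU :: "real \<Rightarrow> real" where
  "sigmaOU u = sqrt (1 - exp (-2 * u))"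

definition OU_T :: "'a measure \<Rightarrow> (real \<Rightarrow> 'a \<Rightarrow> real) \<Rightarrow> real
     \<Rightarrow> ((real \<Rightarrow> real) \<Rightarrow> real) \<Rightarrow> (real \<Rightarrow> real) \<Rightarrow> real" where
  "OU_T M Z u f w = (\<integral>\<omega>. f (\<lambda>t. w t * exp (- u) + sigmaOU u * BMpath Z \<omega> t) \<partial>M)"

end

theory Submission
  imports Defs
begin

lemma cadlag_right:
  assumes w: "w \<in> cadlag01" and t: "t \<in> {0..1}"
  shows "\<exists>b>t. \<exists>B. \<forall>s. t < s \<and> s < b \<longrightarrow> \<bar>w s\<bar> \<le> B"
proof (cases "t < 1")
  case True
  with t w have "(w \<longlongrightarrow> w t) (at_right t)" unfolding cadlag01_def by auto
  hence "eventually (\<lambda>s. dist (w s) (w t) < 1) (at_right t)"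
    by (rule tendstoD) simp
  then obtain b where b: "b > t" "\<forall>s>t. s < b \<longrightarrow> dist (w s) (w t) < 1"
    unfolding eventually_at_right_field by blast
  have "\<forall>s. t < s \<and> s < b \<longrightarrow> \<bar>w s\<bar> \<le> \<bar>w t\<bar> + 1"
  proof (intro allI impI)
    fix s assume "t < s \<and> s < b"
    with b have "\<bar>w s - w t\<bar> < 1" by (auto simp: dist_real_def)
    thus "\<bar>w s\<bar> \<le> \<bar>w t\<bar> + 1" by linarith
  qed
  with b show ?thesis by blast
next
  case False
  with t have "t = 1" by auto
  have "\<forall>s. t < s \<and> s < 2 \<longrightarrow> \<bar>w s\<bar> \<le> 0"
    using w \<open>t = 1\<close> unfolding cadlag01_def by auto
  with \<open>t = 1\<close> show ?thesis by (intro exI[of _ 2]) auto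
qed

lemma cadlag_left:
  assumes w: "w \<in> cadlag01" and t: "t \<in> {0..1}"
  shows "\<exists>a<t. \<exists>B. \<forall>s. a < s \<and> s < t \<longrightarrow> \<bar>w s\<bar> \<le> B"
proof (cases "0 < t")
  case True
  with t w have "\<exists>l. (w \<longlongrightarrow> l) (at_left t)" unfolding cadlag01_def by auto
  then obtain l where "(w \<longlongrightarrow> l) (at_left t)" by blast
  hence "eventually (\<lambda>s. dist (w s) l < 1) (at_left t)"
    by (rule tendstoD) simp
  then obtain b where b: "b < t" "\<forall>s>b. s < t \<longrightarrow> dist (w s) l < 1"
    unfolding eventually_at_left_field by blast
  have "\<forall>s. b < s \<and> s < t \<longrightarrow> \<bar>w s\<bar> \<le> \<bar>l\<bar> + 1"
  proof (intro allI impI)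
    fix s assume "b < s \<and> s < t"
    with b have "\<bar>w s - l\<bar> < 1" by (auto simp: dist_real_def)
    thus "\<bar>w s\<bar> \<le> \<bar>l\<bar> + 1" by linarith
  qed
  with b show ?thesis by blast
next
  case False
  with t have "t = 0" by auto
  have "\<forall>s. -1 < s \<and> s < t \<longrightarrow> \<bar>w s\<bar> \<le> 0"
    using w \<open>t = 0\<close> unfolding cadlag01_def by auto
  with \<open>t = 0\<close> show ?thesis by (intro exI[of _ "-1"]) auto
qed

lemma cadlag_local:
  assumes w: "w \<in> cadlag01" and t: "t \<in> {0..1}"
  shows "\<exists>e>0. \<exists>B. \<forall>s\<in>ball t e. \<bar>w s\<bar> \<le> B"
proof -
  obtain b B1 where b: "b > t" "\<forall>s. t < s \<and> s < b \<longrightarrow> \<bar>w s\<bar> \<le> B1"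
    using cadlag_right[OF w t] by blast
  obtain a B2 where a: "a < t" "\<forall>s. a < s \<and> s < t \<longrightarrow> \<bar>w s\<bar> \<le> B2"
    using cadlag_left[OF w t] by blast
  define e where "e = min (b - t) (t - a)"
  have "e > 0" using a b by (simp add: e_def)
  moreover have "\<forall>s\<in>ball t e. \<bar>w s\<bar> \<le> max B1 (max B2 \<bar>w t\<bar>)"
  proof
    fix s assume "s \<in> ball t e"
    hence "a < s" "s < b" by (auto simp: e_def dist_real_def)
    show "\<bar>w s\<bar> \<le> max B1 (max B2 \<bar>w t\<bar>)"
    proof (cases s t rule: linorder_cases)
      case less thus ?thesis using a \<open>a < s\<close> by force
    next
      case equal thus ?thesis by simp
    next
      case greater thus ?thesis using b \<open>s < b\<close> by force
    qed
  qed
  ultimately show ?thesis by blast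
qed

lemma cadlag_bounded:
  assumes w: "w \<in> cadlag01"
  shows "\<exists>B. \<forall>t. \<bar>w t\<bar> \<le> B"
proof -
  have "\<forall>t\<in>{0..1}. \<exists>e. e > 0 \<and> (\<exists>B. \<forall>s\<in>ball t e. \<bar>w s\<bar> \<le> B)"
    using cadlag_local[OF w] by blast
  then obtain E where E: "\<forall>t\<in>{0..1::real}. E t > 0 \<and> (\<exists>B. \<forall>s\<in>ball t (E t). \<bar>w s\<bar> \<le> B)"
    by metis
  then obtain BB where BB: "\<forall>t\<in>{0..1::real}. \<forall>s\<in>ball t (E t). \<bar>w s\<bar> \<le> BB t"
    by metis
  have "{0..1::real} \<subseteq> (\<Union>t\<in>{0..1}. ball t (E t))"
    using E by force
  then obtain T where T: "T \<subseteq> {0..1}" "finite T" "{0..1::real} \<subseteq> (\<Union>t\<in>T. ball t (E t))"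
    using compactE_image[OF compact_Icc, of "{0..1}" "\<lambda>t. ball t (E t)" 0 1] by blast
  define B where "B = Max (insert 0 (BB ` T))"
  have "\<forall>t. \<bar>w t\<bar> \<le> B"
  proof
    fix t
    show "\<bar>w t\<bar> \<le> B"
    proof (cases "t \<in> {0..1}")
      case True
      then obtain c where c: "c \<in> T" "t \<in> ball c (E c)" using T by blast
      hence "\<bar>w t\<bar> \<le> BB c" using BB T by blast
      also have "BB c \<le> B" unfolding B_def using T c by (intro Max_ge) auto
      finally show ?thesis .
    next
      case False
      hence "w t = 0" using w unfolding cadlag01_def by auto
      moreover have "0 \<le> B" unfolding B_def using T by (intro Max_ge) auto
      ultimately show ?thesis by simp
    qed
  qed
  thus ?thesis by blast
qed

lemma point_le_supnorm:
  assumes "\<forall>t. \<bar>w t\<bar> \<le> B" "t \<in> {0..1}"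
  shows "\<bar>w t\<bar> \<le> supnorm w"
  unfolding supnorm_def using assms
  by (intro cSUP_upper) (auto intro!: bdd_aboveI2[of _ _ B])


definition cpath :: "real \<Rightarrow> real \<Rightarrow> real" where
  "cpath x = (\<lambda>t. if t \<in> {0..1} then x else 0)"

lemma cpath_cadlag: "cpath x \<in> cadlag01"
proof -
  have r: "(cpath x \<longlongrightarrow> cpath x t) (at_right t)" if "t \<in> {0..<1}" for t
  proof -
    have "eventually (\<lambda>s. cpath x s = cpath x t) (at_right t)"
      unfolding eventually_at_right_field using that
      by (intro exI[of _ 1]) (auto simp: cpath_def)
    thus ?thesis by (rule tendsto_eventually)
  qed
  have l: "(cpath x \<longlongrightarrow> x) (at_left t)" if "t \<in> {0<..1}" for t
  proof -
    have "eventually (\<lambda>s. cpath x s = x) (at_left t)"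
      unfolding eventually_at_left_field using that
      by (intro exI[of _ 0]) (auto simp: cpath_def)
    thus ?thesis by (rule tendsto_eventually)
  qed
  have l': "\<forall>t\<in>{0<..1}. \<exists>l. (cpath x \<longlongrightarrow> l) (at_left t)" using l by blast
  have z: "\<forall>t. t \<notin> {0..1} \<longrightarrow> cpath x t = 0" by (simp add: cpath_def)
  show ?thesis unfolding cadlag01_def using r l' z by blast
qed

lemma cpath_supnorm: "supnorm (cpath x) = \<bar>x\<bar>"
proof -
  have "supnorm (cpath x) = (SUP t\<in>{0..1::real}. \<bar>x\<bar>)"
    unfolding supnorm_def by (intro SUP_cong) (auto simp: cpath_def)
  thus ?thesis by simp
qed

definition hh :: "real \<Rightarrow> real" where
  "hh x = x ^ 3 * cos (2 * pi * x)"

definition ff :: "(real \<Rightarrow> real) \<Rightarrow> real" where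
  "ff w = hh (w 0)"

lemma ff_L: "ff \<in> Lspace"
proof -
  have cont: "\<exists>d>0. \<forall>v\<in>cadlag01. supnorm (\<lambda>t. v t - w t) < d \<longrightarrow> \<bar>ff v - ff w\<bar> < e"
    if w: "w \<in> cadlag01" and e: "e > 0" for w e
  proof -
    have "isCont hh (w 0)" unfolding hh_def by (intro continuous_intros)
    then obtain d where d: "d > 0" "\<forall>y. dist y (w 0) < d \<longrightarrow> dist (hh y) (hh (w 0)) < e"
      using e unfolding continuous_at_eps_delta by blast
    have "\<forall>v\<in>cadlag01. supnorm (\<lambda>t. v t - w t) < d \<longrightarrow> \<bar>ff v - ff w\<bar> < e"
    proof (intro ballI impI)
      fix v assume v: "v \<in> cadlag01" and lt: "supnorm (\<lambda>t. v t - w t) < d"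
      obtain B1 where B1: "\<forall>t. \<bar>w t\<bar> \<le> B1" using cadlag_bounded[OF w] by blast
      obtain B2 where B2: "\<forall>t. \<bar>v t\<bar> \<le> B2" using cadlag_bounded[OF v] by blast
      have "\<forall>t. \<bar>v t - w t\<bar> \<le> B2 + B1"
      proof
        fix t show "\<bar>v t - w t\<bar> \<le> B2 + B1" using B1[rule_format, of t] B2[rule_format, of t] by linarith
      qed
      hence "\<bar>v 0 - w 0\<bar> \<le> supnorm (\<lambda>t. v t - w t)"
        using point_le_supnorm[of "\<lambda>t. v t - w t" "B2 + B1" 0] by simp
      with lt have "dist (v 0) (w 0) < d" by (simp add: dist_real_def)
      with d have "dist (hh (v 0)) (hh (w 0)) < e" by blast
      thus "\<bar>ff v - ff w\<bar> < e" by (simp add: ff_def dist_real_def)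
    qed
    with d show ?thesis by blast
  qed
  have gr: "\<bar>ff w\<bar> \<le> 1 * (1 + supnorm w ^ 3)" if w: "w \<in> cadlag01" for w
  proof -
    obtain B where "\<forall>t. \<bar>w t\<bar> \<le> B" using cadlag_bounded[OF w] by blast
    hence le: "\<bar>w 0\<bar> \<le> supnorm w" using point_le_supnorm[of w B 0] by simp
    have "\<bar>ff w\<bar> = \<bar>w 0\<bar> ^ 3 * \<bar>cos (2 * pi * w 0)\<bar>"
      by (simp add: ff_def hh_def abs_mult power_abs)
    also have "\<dots> \<le> \<bar>w 0\<bar> ^ 3 * 1"
      by (intro mult_left_mono) auto
    also have "\<dots> \<le> supnorm w ^ 3" using le by (simp add: power_mono)
    finally show ?thesis by simp
  qed
  show ?thesis unfolding Lspace_def using cont gr by blast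
qed

lemma OU_cpath:
  assumes "std_BM M Z"
  shows "OU_T M Z u ff (cpath x) = hh (x * exp (- u))"
proof -
  have ps: "prob_space M" using assms unfolding std_BM_def by blast
  have z0: "\<forall>\<omega>\<in>space M. Z 0 \<omega> = 0" using assms unfolding std_BM_def by blast
  have "OU_T M Z u ff (cpath x) = (\<integral>\<omega>. hh (x * exp (- u)) \<partial>M)"
    unfolding OU_T_def ff_def
    by (intro Bochner_Integration.integral_cong) (auto simp: cpath_def BMpath_def z0)
  also have "\<dots> = hh (x * exp (- u))" using ps by (simp add: prob_space.prob_space)
  finally show ?thesis .
qed


lemma cos_nonpos_aux:
  assumes "1/4 \<le> y" "y \<le> 3/4"
  shows "cos (2 * pi * y) \<le> 0"
proof -
  have "cos (2 * pi * y - pi) = - cos (2 * pi * y)" by (simp add: cos_diff)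
  moreover have "0 \<le> cos (2 * pi * y - pi)"
  proof (rule cos_ge_zero)
    have "pi * (1/4) \<le> pi * y" using assms(1) pi_gt_zero by (intro mult_left_mono) auto
    thus "- (pi / 2) \<le> 2 * pi * y - pi" by linarith
    have "pi * y \<le> pi * (3/4)" using assms(2) pi_gt_zero by (intro mult_left_mono) auto
    thus "2 * pi * y - pi \<le> pi / 2" by linarith
  qed
  ultimately show ?thesis by linarith
qed

lemma cos_shift_nat: "cos (2 * pi * (real k * b)) = cos (2 * pi * (real k * (1 - b)))"
proof -
  have c: "cos (2 * pi * real k) = 1" using cos_int_2pin[of "int k"] by simp
  have s: "sin (2 * pi * real k) = 0" using sin_int_2pin[of "int k"] by simp
  have "2 * pi * (real k * b) = 2 * pi * real k - 2 * pi * (real k * (1 - b))"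
    by (simp add: algebra_simps)
  hence "cos (2 * pi * (real k * b)) = cos (2 * pi * real k - 2 * pi * (real k * (1 - b)))" by simp
  also have "\<dots> = cos (2 * pi * (real k * (1 - b)))" by (simp add: cos_diff c s)
  finally show ?thesis .
qed

lemma exists_k:
  assumes "0 < a" "a \<le> 1/2"
  shows "\<exists>k::nat. k \<ge> 1 \<and> cos (2 * pi * (real k * (1 - a))) \<le> 0"
proof -
  define k where "k = nat \<lceil>1 / (4 * a)\<rceil>"
  have pos: "1 / (4 * a) > 0" using assms by simp
  have k1: "real k \<ge> 1 / (4 * a)" unfolding k_def using pos
    by (metis le_nat_iff less_le_not_le of_int_ceiling_le_add_one of_nat_nat real_nat_ceiling_ge)
  have k2: "real k < 1 / (4 * a) + 1" unfolding k_def using pos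
    by (simp add: of_nat_nat) linarith
  have "real k > 0" using k1 pos by linarith
  hence kge: "k \<ge> 1" by simp
  have y1: "real k * a \<ge> 1/4" using k1 assms by (simp add: field_simps)
  have "real k * a < (1 / (4 * a) + 1) * a" using k2 assms by (intro mult_strict_right_mono) auto
  also have "\<dots> = 1/4 + a" using assms by (simp add: field_simps)
  finally have y2: "real k * a \<le> 3/4" using assms by linarith
  have "cos (2 * pi * (real k * (1 - a))) = cos (2 * pi * (real k * (1 - (1 - a))))"
    by (rule cos_shift_nat)
  also have "\<dots> = cos (2 * pi * (real k * a))" by simp
  also have "\<dots> \<le> 0" using y1 y2 by (rule cos_nonpos_aux)
  finally show ?thesis using kge by blast
qed


lemma normL_big:
  assumes BM: "std_BM M Z" and u: "0 < u" "u < ln 2"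
  shows "ereal (1/2) \<le> normL (\<lambda>w. OU_T M Z u ff w - ff w)"
proof -
  define a where "a = 1 - exp (- u)"
  have "exp (- u) < 1" using u by simp
  hence a0: "0 < a" by (simp add: a_def)
  have "exp (- ln 2) < exp (- u)" using u by simp
  hence "1/2 < exp (- u)" by (simp add: exp_minus)
  hence a1: "a \<le> 1/2" by (simp add: a_def)
  obtain k :: nat where k: "k \<ge> 1" "cos (2 * pi * (real k * (1 - a))) \<le> 0"
    using exists_k[OF a0 a1] by blast
  define x where "x = real k"
  have x1: "x \<ge> 1" using k by (simp add: x_def)
  have x3: "x ^ 3 \<ge> 1" using x1 by (simp add: one_le_power)
  have hx: "hh x = x ^ 3" using cos_int_2pin[of "int k"] by (simp add: hh_def x_def)
  have "hh (x * exp (- u)) = (x * exp (- u)) ^ 3 * cos (2 * pi * (real k * (1 - a)))"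
    by (simp add: hh_def a_def x_def)
  also have "\<dots> \<le> 0" using k(2) x1 by (intro mult_nonneg_nonpos) auto
  finally have hu: "hh (x * exp (- u)) \<le> 0" .
  have val: "OU_T M Z u ff (cpath x) - ff (cpath x) = hh (x * exp (- u)) - x ^ 3"
    using OU_cpath[OF BM] hx by (simp add: ff_def cpath_def)
  have "1/2 \<le> x ^ 3 / (1 + x ^ 3)" using x3 by (simp add: field_simps)
  also have "\<dots> \<le> \<bar>OU_T M Z u ff (cpath x) - ff (cpath x)\<bar> / (1 + supnorm (cpath x) ^ 3)"
  proof -
    have ax: "\<bar>x\<bar> = x" using x1 by simp
    have "x ^ 3 \<le> \<bar>hh (x * exp (- u)) - x ^ 3\<bar>" using hu by linarith
    thus ?thesis unfolding val cpath_supnorm ax using x3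
      by (intro divide_right_mono) auto
  qed
  finally have "ereal (1/2) \<le> ereal (\<bar>OU_T M Z u ff (cpath x) - ff (cpath x)\<bar> / (1 + supnorm (cpath x) ^ 3))"
    by simp
  also have "\<dots> \<le> normL (\<lambda>w. OU_T M Z u ff w - ff w)"
    unfolding normL_def by (rule SUP_upper[OF cpath_cadlag])
  finally show ?thesis .
qed

theorem lemma1:
  fixes M :: "'a measure" and Z :: "real \<Rightarrow> 'a \<Rightarrow> real"
  assumes "std_BM M Z"
  shows "\<exists>f\<in>Lspace. \<not> ((\<lambda>u. normL (\<lambda>w. OU_T M Z u f w - f w)) \<longlongrightarrow> 0) (at_right 0)"
proof (intro bexI[OF _ ff_L] notI)
  assume lim: "((\<lambda>u. normL (\<lambda>w. OU_T M Z u ff w - ff w)) \<longlongrightarrow> 0) (at_right 0)"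
  have "eventually (\<lambda>u. normL (\<lambda>w. OU_T M Z u ff w - ff w) < ereal (1/2)) (at_right (0::real))"
    using order_tendstoD(2)[OF lim] by (simp add: zero_ereal_def)
  moreover have "eventually (\<lambda>u. ereal (1/2) \<le> normL (\<lambda>w. OU_T M Z u ff w - ff w)) (at_right (0::real))"
    unfolding eventually_at_right_field
    by (intro exI[of _ "ln 2"]) (auto intro: normL_big[OF assms])
  ultimately have "eventually (\<lambda>u::real. False) (at_right 0)"
    by eventually_elim auto
  thus False by simp
qed

end
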